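(* Let $\hat W$ be a first degree iMPO in regular form of bond dimension $\chi$, with upper-left block $\hat V$, and suppose the leading eigenvector $X$ of $T_V$ (the left eigenvector $XT_V=X$ with $X_{00}=1$) is positive semi-definite of rank $1+\chi'\le1+\chi$. Then there is a gauge transform $L\hat W=\hat W'L$, with $L$ a complex $(\chi'+2)\times(\chi+2)$ matrix of block form $\begin{pmatrix}1&\mathbf t&r\\0&\mathsf L&\mathbf s\\0&0&1\end{pmatrix}$, such that $\hat W'$ is an iMPO in regular form of bond dimension $\chi'$ and the leading eigenvector $X'$ of $T_{V'}$ ($\hat V'$ the upper-left block of $\hat W'$) is positive definite.
   Context: $\mathcal A$ is the algebra of operators on $\mathbb C^q$ with inner product $\langle\hat A,\hat B\rangle=\mathrm{Tr}[\hat A^\dagger\hat B]/\mathrm{Tr}[\hat 1]$ and orthonormal basis $\{\hat O_\alpha\}$ with $\hat O_0=\hat 1$; $(W_\alpha)_{ab}=\langle\hat O_\alpha,\hat W_{ab}\rangle$ and the transfer matrix acts by $XT_W=\sum_\alpha W_\alpha^\dagger XW_\alpha$. An iMPO in regular form of bond dimension $\chi$ is a $(\chi+2)\times(\chi+2)$ matrix with entries in $\mathcal A$ of block form $\begin{pmatrix}\hat 1&\hat{\mathbf c}&\hat d\\0&\hat{\mathsf A}&\hat{\mathbf b}\\0&0&\hat 1\end{pmatrix}$ (block sizes $1,\chi,1$), with upper-left block $\hat V=\begin{pmatrix}\hat 1&\hat{\mathbf c}\\0&\hat{\mathsf A}\end{pmatrix}$; it is first degree if every eigenvalue of $T_A$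 has modulus $<1$ (in which case $1$ is the unique eigenvalue of $T_V$ of modulus $\ge1$ and has a left eigenvector normalized by $X_{00}=1$). *)

theory Defs
  imports Complex_Main "Jordan_Normal_Form.Matrix" "Jordan_Normal_Form.DL_Rank"
begin

text \<open>Operators on C^q are q x q complex matrices.  An iMPO of bond dimension chi is
  represented by its operator-valued entries W a b (for a b < chi+2).\<close>

type_synonym impo = "nat \<Rightarrow> nat \<Rightarrow> complex mat"

definition op_inner :: "nat \<Rightarrow> complex mat \<Rightarrow> complex mat \<Rightarrow> complex" where
  "op_inner q A B = (\<Sum>i<q. \<Sum>j<q. cnj (A $$ (i,j)) * B $$ (i,j)) / of_nat q"

text \<open>Transfer matrix of an n x n operator-valued matrix W, acting on the left on an
  n x n complex matrix X:  X T_W = sum_alpha W_alpha^dagger X W_alpha.  Expanding in the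
  orthonormal basis gives (X T_W)_{bd} = sum_{a,c} X_{ac} <W_ab, W_cd> (basis independent).\<close>
definition transfer :: "nat \<Rightarrow> nat \<Rightarrow> impo \<Rightarrow> complex mat \<Rightarrow> complex mat" where
  "transfer q n W X = mat n n (\<lambda>(b,d). \<Sum>a<n. \<Sum>c<n. X $$ (a,c) * op_inner q (W a b) (W c d))"

definition regular_form :: "nat \<Rightarrow> nat \<Rightarrow> impo \<Rightarrow> bool" where
  "regular_form q chi W \<longleftrightarrow>
     (\<forall>a<chi+2. \<forall>b<chi+2. W a b \<in> carrier_mat q q) \<and>
     W 0 0 = 1\<^sub>m q \<and> W (chi+1) (chi+1) = 1\<^sub>m q \<and>
     (\<forall>a. 0 < a \<and> a < chi+2 \<longrightarrow> W a 0 = 0\<^sub>m q q) \<and>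
     (\<forall>b<chi+1. W (chi+1) b = 0\<^sub>m q q)"

definition A_block :: "impo \<Rightarrow> impo" where
  "A_block W = (\<lambda>a b. W (a+1) (b+1))"

definition V_block :: "impo \<Rightarrow> impo" where
  "V_block W = W"  \<comment> \<open>used with size chi+1, i.e. indices 0..chi\<close>

definition first_degree :: "nat \<Rightarrow> nat \<Rightarrow> impo \<Rightarrow> bool" where
  "first_degree q chi W \<longleftrightarrow>
     (\<forall>(lam::complex) Y. Y \<in> carrier_mat chi chi \<and> Y \<noteq> 0\<^sub>m chi chi \<and>
        transfer q chi (A_block W) Y = lam \<cdot>\<^sub>m Y \<longrightarrow> cmod lam < 1)"

definition leading_eigvec :: "nat \<Rightarrow> nat \<Rightarrow> impo \<Rightarrow> complex mat \<Rightarrow> bool" where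
  "leading_eigvec q chi W X \<longleftrightarrow>
     X \<in> carrier_mat (chi+1) (chi+1) \<and> transfer q (chi+1) (V_block W) X = X \<and> X $$ (0,0) = 1"

definition hermitian_mat :: "nat \<Rightarrow> complex mat \<Rightarrow> bool" where
  "hermitian_mat n X \<longleftrightarrow> X \<in> carrier_mat n n \<and>
     (\<forall>i<n. \<forall>j<n. X $$ (j,i) = cnj (X $$ (i,j)))"

definition quad_form :: "nat \<Rightarrow> complex mat \<Rightarrow> (nat \<Rightarrow> complex) \<Rightarrow> complex" where
  "quad_form n X v = (\<Sum>i<n. \<Sum>j<n. cnj (v i) * X $$ (i,j) * v j)"

definition pos_semidef :: "nat \<Rightarrow> complex mat \<Rightarrow> bool" where
  "pos_semidef n X \<longleftrightarrow> hermitian_mat n X \<and> (\<forall>v. 0 \<le> Re (quad_form n X v))"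

definition pos_def :: "nat \<Rightarrow> complex mat \<Rightarrow> bool" where
  "pos_def n X \<longleftrightarrow> hermitian_mat n X \<and>
     (\<forall>v. (\<exists>i<n. v i \<noteq> 0) \<longrightarrow> 0 < Re (quad_form n X v))"

definition gauge_block_form :: "nat \<Rightarrow> nat \<Rightarrow> complex mat \<Rightarrow> bool" where
  "gauge_block_form chi' chi L \<longleftrightarrow> L \<in> carrier_mat (chi'+2) (chi+2) \<and>
     L $$ (0,0) = 1 \<and> L $$ (chi'+1, chi+1) = 1 \<and>
     (\<forall>i. 0 < i \<and> i < chi'+2 \<longrightarrow> L $$ (i,0) = 0) \<and>
     (\<forall>j<chi+1. L $$ (chi'+1, j) = 0)"

text \<open>Gauge relation  L W = W' L  (W of size n, W' of size n', L of size n' x n),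
  stated entrywise: sum_k L_ik W_kj = sum_k W'_ik L_kj as operators on C^q.\<close>
definition gauge_rel :: "nat \<Rightarrow> nat \<Rightarrow> nat \<Rightarrow> complex mat \<Rightarrow> impo \<Rightarrow> impo \<Rightarrow> bool" where
  "gauge_rel q n' n L W W' \<longleftrightarrow>
     (\<forall>i<n'. \<forall>j<n. \<forall>u<q. \<forall>v<q.
        (\<Sum>k<n. L $$ (i,k) * (W k j) $$ (u,v)) = (\<Sum>k<n'. (W' i k) $$ (u,v) * L $$ (k,j)))"

end

theory Submission
  imports Defs
begin



definition adjm :: "complex mat \<Rightarrow> complex mat" where
  "adjm A = mat (dim_col A) (dim_row A) (\<lambda>(i,j). cnj (A $$ (j,i)))"

lemma adjm_carrier[simp]: "A \<in> carrier_mat m n \<Longrightarrow> adjm A \<in> carrier_mat n m"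
  unfolding adjm_def by auto
lemma adjm_dims[simp]: "dim_row (adjm A) = dim_col A" "dim_col (adjm A) = dim_row A"
  unfolding adjm_def by auto
lemma adjm_index[simp]: "i < dim_col A \<Longrightarrow> j < dim_row A \<Longrightarrow> adjm A $$ (i,j) = cnj (A $$ (j,i))"
  unfolding adjm_def by auto
lemma adjm_adjm[simp]: "adjm (adjm A) = A"
  by (rule eq_matI) auto
lemma adjm_mult: assumes "A \<in> carrier_mat m n" "B \<in> carrier_mat n k"
  shows "adjm (A * B) = adjm B * adjm A"
  by (rule eq_matI) (insert assms, auto simp: scalar_prod_def mult.commute)

lemma sandwich_index:
  assumes P: "P \<in> carrier_mat n k" and Y: "Y \<in> carrier_mat n n" and b: "b < k" and d: "d < k"
  shows "(adjm P * Y * P) $$ (b,d) = (\<Sum>a<n. \<Sum>c<n. cnj (P $$ (a,b)) * Y $$ (a,c) * P $$ (c,d))"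
proof -
  have "(adjm P * Y * P) $$ (b,d) = (\<Sum>c<n. (\<Sum>a<n. cnj (P $$ (a,b)) * Y $$ (a,c)) * P $$ (c,d))"
    using P Y b d by (simp add: scalar_prod_def atLeast0LessThan)
  also have "\<dots> = (\<Sum>c<n. \<Sum>a<n. cnj (P $$ (a,b)) * Y $$ (a,c) * P $$ (c,d))"
    by (simp add: sum_distrib_right)
  also have "\<dots> = (\<Sum>a<n. \<Sum>c<n. cnj (P $$ (a,b)) * Y $$ (a,c) * P $$ (c,d))"
    by (rule sum.swap)
  finally show ?thesis .
qed

lemma sandwich_sum:
  assumes P: "P \<in> carrier_mat n k" and Y: "Y \<in> carrier_mat n n"
    and F: "\<And>u v. F u v \<in> carrier_mat n n"
    and YF: "\<And>a c. a < n \<Longrightarrow> c < n \<Longrightarrow> Y $$ (a,c) = (\<Sum>u<q. \<Sum>v<q. F u v $$ (a,c)) / of_nat q"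
    and b: "b < k" and d: "d < k"
  shows "(adjm P * Y * P) $$ (b,d) = (\<Sum>u<q. \<Sum>v<q. (adjm P * F u v * P) $$ (b,d)) / of_nat q"
proof -
  have "(adjm P * Y * P) $$ (b,d) = (\<Sum>a<n. \<Sum>c<n. cnj (P $$ (a,b)) * ((\<Sum>u<q. \<Sum>v<q. F u v $$ (a,c)) / of_nat q) * P $$ (c,d))"
    using sandwich_index[OF P Y b d] YF by simp
  also have "\<dots> = (\<Sum>a<n. \<Sum>c<n. \<Sum>u<q. \<Sum>v<q. cnj (P $$ (a,b)) * F u v $$ (a,c) * P $$ (c,d) / of_nat q)"
    by (simp add: sum_distrib_left sum_distrib_right sum_divide_distrib)
  also have "\<dots> = (\<Sum>u<q. \<Sum>v<q. \<Sum>a<n. \<Sum>c<n. cnj (P $$ (a,b)) * F u v $$ (a,c) * P $$ (c,d) / of_nat q)"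
  proof -
    have "(\<Sum>a<n. \<Sum>c<n. \<Sum>u<q. \<Sum>v<q. cnj (P $$ (a,b)) * F u v $$ (a,c) * P $$ (c,d) / of_nat q)
      = (\<Sum>a<n. \<Sum>u<q. \<Sum>c<n. \<Sum>v<q. cnj (P $$ (a,b)) * F u v $$ (a,c) * P $$ (c,d) / of_nat q)"
      by (rule sum.cong[OF refl], rule sum.swap)
    also have "\<dots> = (\<Sum>u<q. \<Sum>a<n. \<Sum>c<n. \<Sum>v<q. cnj (P $$ (a,b)) * F u v $$ (a,c) * P $$ (c,d) / of_nat q)"
      by (rule sum.swap)
    also have "\<dots> = (\<Sum>u<q. \<Sum>a<n. \<Sum>v<q. \<Sum>c<n. cnj (P $$ (a,b)) * F u v $$ (a,c) * P $$ (c,d) / of_nat q)"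
      by (rule sum.cong[OF refl], rule sum.cong[OF refl], rule sum.swap)
    also have "\<dots> = (\<Sum>u<q. \<Sum>v<q. \<Sum>a<n. \<Sum>c<n. cnj (P $$ (a,b)) * F u v $$ (a,c) * P $$ (c,d) / of_nat q)"
      by (rule sum.cong[OF refl], rule sum.swap)
    finally show ?thesis .
  qed
  also have "\<dots> = (\<Sum>u<q. \<Sum>v<q. (adjm P * F u v * P) $$ (b,d)) / of_nat q"
    using sandwich_index[OF P F b d] by (simp add: sum_divide_distrib)
  finally show ?thesis .
qed

definition Vm :: "nat \<Rightarrow> impo \<Rightarrow> nat \<Rightarrow> nat \<Rightarrow> complex mat" where
  "Vm n W u v = mat n n (\<lambda>(i,j). W i j $$ (u,v))"

lemma Vm_carrier[simp]: "Vm n W u v \<in> carrier_mat n n" unfolding Vm_def by auto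

lemma transfer_sum:
  assumes Y: "Y \<in> carrier_mat n n" and "q \<ge> 1"
    and Wc: "\<And>a b. a < n \<Longrightarrow> b < n \<Longrightarrow> W a b \<in> carrier_mat q q"
    and b: "b < n" and d: "d < n"
  shows "transfer q n W Y $$ (b,d) = (\<Sum>u<q. \<Sum>v<q. (adjm (Vm n W u v) * Y * Vm n W u v) $$ (b,d)) / of_nat q"
proof -
  have "transfer q n W Y $$ (b,d) = (\<Sum>a<n. \<Sum>c<n. Y $$ (a,c) * op_inner q (W a b) (W c d))"
    unfolding transfer_def using b d by simp
  also have "\<dots> = (\<Sum>a<n. \<Sum>c<n. \<Sum>u<q. \<Sum>v<q. cnj (W a b $$ (u,v)) * Y $$ (a,c) * W c d $$ (u,v) / of_nat q)"
    unfolding op_inner_def by (simp add: sum_distrib_left sum_divide_distrib mult.commute mult.left_commute)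
  also have "\<dots> = (\<Sum>u<q. \<Sum>v<q. \<Sum>a<n. \<Sum>c<n. cnj (W a b $$ (u,v)) * Y $$ (a,c) * W c d $$ (u,v) / of_nat q)"
  proof -
    have "(\<Sum>a<n. \<Sum>c<n. \<Sum>u<q. \<Sum>v<q. cnj (W a b $$ (u,v)) * Y $$ (a,c) * W c d $$ (u,v) / of_nat q)
      = (\<Sum>a<n. \<Sum>u<q. \<Sum>c<n. \<Sum>v<q. cnj (W a b $$ (u,v)) * Y $$ (a,c) * W c d $$ (u,v) / of_nat q)"
      by (rule sum.cong[OF refl], rule sum.swap)
    also have "\<dots> = (\<Sum>u<q. \<Sum>a<n. \<Sum>c<n. \<Sum>v<q. cnj (W a b $$ (u,v)) * Y $$ (a,c) * W c d $$ (u,v) / of_nat q)"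
      by (rule sum.swap)
    also have "\<dots> = (\<Sum>u<q. \<Sum>a<n. \<Sum>v<q. \<Sum>c<n. cnj (W a b $$ (u,v)) * Y $$ (a,c) * W c d $$ (u,v) / of_nat q)"
      by (rule sum.cong[OF refl], rule sum.cong[OF refl], rule sum.swap)
    also have "\<dots> = (\<Sum>u<q. \<Sum>v<q. \<Sum>a<n. \<Sum>c<n. cnj (W a b $$ (u,v)) * Y $$ (a,c) * W c d $$ (u,v) / of_nat q)"
      by (rule sum.cong[OF refl], rule sum.swap)
    finally show ?thesis .
  qed
  also have "\<dots> = (\<Sum>u<q. \<Sum>v<q. (adjm (Vm n W u v) * Y * Vm n W u v) $$ (b,d)) / of_nat q"
    using sandwich_index[OF Vm_carrier Y b d] b d by (simp add: sum_divide_distrib Vm_def)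
  finally show ?thesis .
qed



definition bil :: "nat \<Rightarrow> complex mat \<Rightarrow> (nat \<Rightarrow> complex) \<Rightarrow> (nat \<Rightarrow> complex) \<Rightarrow> complex" where
  "bil n X a b = (\<Sum>i<n. \<Sum>j<n. cnj (a i) * X $$ (i,j) * b j)"

lemma quad_expand:
  fixes t :: real
  shows "quad_form n X (\<lambda>i. z i - of_real t * y i) =
    quad_form n X z - of_real t * bil n X z y - of_real t * bil n X y z + of_real (t*t) * quad_form n X y"
proof -
  have pt: "\<And>i j. cnj (z i - of_real t * y i) * X $$ (i,j) * (z j - of_real t * y j) =
     cnj (z i) * X $$ (i,j) * z j - of_real t * (cnj (z i) * X $$ (i,j) * y j)
     - of_real t * (cnj (y i) * X $$ (i,j) * z j) + of_real (t*t) * (cnj (y i) * X $$ (i,j) * y j)"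
    by (simp add: algebra_simps)
  show ?thesis
    unfolding quad_form_def bil_def pt
    by (simp only: sum.distrib sum_subtractf sum_distrib_left[symmetric])
qed

lemma psd_kernel:
  assumes psd: "pos_semidef n X" and z: "Re (quad_form n X z) = 0"
  shows "\<forall>i<n. (\<Sum>j<n. X $$ (i,j) * z j) = 0"
proof -
  define y where "y = (\<lambda>i. \<Sum>j<n. X $$ (i,j) * z j)"
  have herm: "\<And>i j. i < n \<Longrightarrow> j < n \<Longrightarrow> X $$ (j,i) = cnj (X $$ (i,j))"
    using psd unfolding pos_semidef_def hermitian_mat_def by blast
  define S where "S = (\<Sum>i<n. cnj (y i) * y i)"
  have b1: "bil n X y z = S" unfolding bil_def S_def y_def
    by (simp add: sum_distrib_left mult.assoc)
  have b2: "bil n X z y = S"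
  proof -
    have "bil n X z y = (\<Sum>j<n. \<Sum>i<n. cnj (z i) * X $$ (i,j) * y j)" unfolding bil_def by (rule sum.swap)
    also have "\<dots> = (\<Sum>j<n. (\<Sum>i<n. cnj (z i) * X $$ (i,j)) * y j)" by (simp add: sum_distrib_right)
    also have "\<dots> = (\<Sum>j<n. cnj (y j) * y j)"
    proof (rule sum.cong[OF refl])
      fix j assume j: "j \<in> {..<n}"
      have "(\<Sum>i<n. cnj (z i) * X $$ (i,j)) = (\<Sum>i<n. cnj (X $$ (j,i) * z i))"
      proof (rule sum.cong[OF refl])
        fix i assume "i \<in> {..<n}"
        hence "X $$ (i,j) = cnj (X $$ (j,i))" using herm[of j i] j by simp
        thus "cnj (z i) * X $$ (i,j) = cnj (X $$ (j,i) * z i)" by (simp add: mult.commute)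
      qed
      also have "\<dots> = cnj (y j)" unfolding y_def by (simp add: cnj_sum)
      finally have "(\<Sum>i<n. cnj (z i) * X $$ (i,j)) = cnj (y j)" .
      thus "(\<Sum>i<n. cnj (z i) * X $$ (i,j)) * y j = cnj (y j) * y j" by simp
    qed
    finally show ?thesis unfolding S_def .
  qed
  have cm: "\<And>w. Re (cnj w * w) = (cmod w)^2"
    by (simp add: cmod_power2 power2_eq_square[of "Re _"] power2_eq_square[of "Im _"])
  have ReS: "Re S = (\<Sum>i<n. (cmod (y i))^2)" unfolding S_def Re_sum cm ..
  have K: "0 \<le> Re (quad_form n X y)" using psd unfolding pos_semidef_def by blast
  have main: "\<And>t::real. 0 \<le> - 2 * t * Re S + t * t * Re (quad_form n X y)"
  proof -
    fix t :: real
    have "0 \<le> Re (quad_form n X (\<lambda>i. z i - of_real t * y i))" using psd unfolding pos_semidef_def by blast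
    also have "\<dots> = - 2 * t * Re S + t * t * Re (quad_form n X y)"
      unfolding quad_expand b1 b2 using z by simp
    finally show "0 \<le> - 2 * t * Re S + t * t * Re (quad_form n X y)" .
  qed
  have "Re S = 0"
  proof (rule ccontr)
    assume "Re S \<noteq> 0"
    moreover have "0 \<le> Re S" unfolding ReS by (intro sum_nonneg) auto
    ultimately have Sp: "0 < Re S" by auto
    define k where "k = Re (quad_form n X y)"
    define t where "t = Re S / (k + 1)"
    have tp: "0 < t" unfolding t_def using Sp K k_def by auto
    have "t * k < Re S" unfolding t_def using Sp K k_def by (simp add: divide_less_eq field_simps)
    hence "t * (t * k) < t * (2 * Re S)" using tp Sp by (intro mult_strict_left_mono) auto
    thus False using main[of t] k_def by (simp add: algebra_simps)
  qed
  hence "(\<Sum>i<n. (cmod (y i))^2) = 0" using ReS by simp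
  hence "\<forall>i\<in>{..<n}. (cmod (y i))^2 = 0" by (subst sum_nonneg_eq_0_iff[symmetric]) auto
  thus ?thesis unfolding y_def by auto
qed



lemma colspace_basis:
  fixes X :: "complex mat"
  assumes X: "X \<in> carrier_mat n n" and nz: "col X 0 \<noteq> 0\<^sub>v n" and n0: "0 < n"
  defines "r \<equiv> vec_space.rank n X"
  shows "\<exists>C A. C \<in> carrier_mat n r \<and> A \<in> carrier_mat r n \<and> X = C * A \<and> 0 < r \<and>
     col C 0 = col X 0 \<and> (\<forall>i<r. \<exists>j<n. col C i = col X j) \<and>
     (\<forall>v\<in>carrier_vec r. C *\<^sub>v v = 0\<^sub>v n \<longrightarrow> v = 0\<^sub>v r)"
proof -
  interpret vec_space "TYPE(complex)" n .
  let ?P = "\<lambda>T. T \<subseteq> set (cols X) \<and> lin_indpt T"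
  have colsX: "set (cols X) \<subseteq> carrier_vec n" using X cols_dim by blast
  have x0c: "col X 0 \<in> carrier_vec n" using X by auto
  have x0in: "col X 0 \<in> set (cols X)" using X n0 by (metis cols_length cols_nth carrier_matD(2) nth_mem)
  have "col X 0 \<notin> span {}" using nz span_empty by auto
  moreover have "lin_indpt {}"
    by (metis (no_types) empty_subsetI fin_dim finite_basis_exists subset_li_is_li vec_vs vectorspace.basis_def)
  ultimately have li0: "lin_indpt {col X 0}"
    using lin_dep_iff_in_span[of "{}" "col X 0"] x0c by auto
  obtain S where S: "finite S" "maximal S ?P" "{col X 0} \<subseteq> S"
    using maximal_exists_superset[of "set (cols X)" ?P "{col X 0}"] li0 x0in by auto
  have SP: "S \<subseteq> set (cols X)" "lin_indpt S" using S(2) unfolding maximal_def by auto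
  have rS: "r = card S" unfolding r_def using rank_card_indpt[OF X S(2)] .
  have Sc: "S \<subseteq> carrier_vec n" using SP colsX by auto
  obtain s where s: "distinct s" "set s = S - {col X 0}" using S(1) finite_distinct_list
    by (metis finite_Diff)
  define cl where "cl = col X 0 # s"
  have cl: "distinct cl" "set cl = S" using s S(3) unfolding cl_def by auto
  have lencl: "length cl = r" using rS cl distinct_card by fastforce
  have clc: "set cl \<subseteq> carrier_vec n" using cl Sc by auto
  define C where "C = mat_of_cols n cl"
  have Cc: "C \<in> carrier_mat n r" unfolding C_def using lencl by auto
  have colsC: "cols C = cl" unfolding C_def using cols_mat_of_cols[OF clc] .
  have r0: "0 < r" using lencl cl_def by auto
  have C0: "col C 0 = col X 0" using colsC cols_nth[of 0 C] Cc r0 cl_def by (metis carrier_matD(2) nth_Cons_0)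
  have Cin: "\<forall>i<r. \<exists>j<n. col C i = col X j"
  proof (intro allI impI)
    fix i assume i: "i < r"
    have "col C i \<in> S" using cols_nth[of i C] Cc i colsC cl by (metis carrier_matD(2) nth_mem lencl)
    hence "col C i \<in> set (cols X)" using SP by auto
    thus "\<exists>j<n. col C i = col X j" using X by (metis cols_length cols_nth carrier_matD(2) in_set_conv_nth)
  qed
  have Cinj: "\<forall>v\<in>carrier_vec r. C *\<^sub>v v = 0\<^sub>v n \<longrightarrow> v = 0\<^sub>v r"
  proof (intro ballI impI, rule ccontr)
    fix v assume v: "v \<in> carrier_vec r" "C *\<^sub>v v = 0\<^sub>v n" "v \<noteq> 0\<^sub>v r"
    have "lin_dep (set (cols C))" using lin_depI[OF Cc v(1) v(3) v(2)] colsC cl by auto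
    thus False using SP colsC cl by auto
  qed
  have span: "\<forall>j<n. \<exists>a\<in>carrier_vec r. col X j = C *\<^sub>v a"
  proof (intro allI impI)
    fix j assume j: "j < n"
    have xj: "col X j \<in> set (cols X)" using X j by (metis cols_length cols_nth carrier_matD(2) nth_mem)
    have "col X j \<in> span S"
    proof (cases "col X j \<in> S")
      case True thus ?thesis using in_own_span[OF Sc] by auto
    next
      case False
      have "\<not> ?P (S \<union> {col X j})" using S(2) False xj SP unfolding maximal_def by blast
      hence "lin_dep (S \<union> {col X j})" using xj SP by auto
      thus ?thesis using lin_dep_iff_in_span[OF Sc SP(2) _ False] xj colsX by auto
    qed
    then obtain a where a: "lincomb a S = col X j" using finite_in_span[OF S(1) Sc] by auto
    have "C *\<^sub>v vec r (\<lambda>i. a (col C i)) = lincomb a (set (cols C))"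
      using mat_mult_eq_lincomb[OF Cc] colsC cl by auto
    thus "\<exists>a\<in>carrier_vec r. col X j = C *\<^sub>v a" using a colsC cl by (intro bexI[of _ "vec r (\<lambda>i. a (col C i))"]) auto
  qed
  define sa where "sa = (\<lambda>j. SOME a. a \<in> carrier_vec r \<and> col X j = C *\<^sub>v a)"
  have sa: "\<And>j. j < n \<Longrightarrow> sa j \<in> carrier_vec r \<and> col X j = C *\<^sub>v sa j"
    unfolding sa_def using someI_ex[of "\<lambda>a. a \<in> carrier_vec r \<and> col X _ = C *\<^sub>v a"] span by blast
  define A where "A = mat r n (\<lambda>(i,j). sa j $ i)"
  have Ac: "A \<in> carrier_mat r n" unfolding A_def by auto
  have colA: "\<And>j. j < n \<Longrightarrow> col A j \<in> carrier_vec r \<and> col X j = C *\<^sub>v col A j"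
  proof -
    fix j assume j: "j < n"
    have "col A j = sa j" unfolding A_def using j sa[OF j] by (auto intro!: eq_vecI)
    thus "col A j \<in> carrier_vec r \<and> col X j = C *\<^sub>v col A j" using sa[OF j] by auto
  qed
  have XCA: "X = C * A"
  proof (rule eq_matI)
    fix i j assume ij: "i < dim_row (C * A)" "j < dim_col (C * A)"
    hence i: "i < n" and j: "j < n" using Cc Ac by auto
    have "X $$ (i,j) = col X j $ i" using X i j by auto
    also have "\<dots> = (C *\<^sub>v col A j) $ i" using colA[OF j] by simp
    also have "\<dots> = (C * A) $$ (i,j)" using Cc Ac i j by auto
    finally show "X $$ (i,j) = (C * A) $$ (i,j)" .
  qed (insert X Cc Ac, auto)
  show ?thesis using Cc Ac XCA r0 C0 Cin Cinj by blast
qed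


lemma inj_cancel_vec:
  fixes C :: "complex mat"
  assumes C: "C \<in> carrier_mat n r" and inj: "\<forall>v\<in>carrier_vec r. C *\<^sub>v v = 0\<^sub>v n \<longrightarrow> v = 0\<^sub>v r"
    and a: "a \<in> carrier_vec r" and b: "b \<in> carrier_vec r" and eq: "C *\<^sub>v a = C *\<^sub>v b"
  shows "a = b"
proof -
  have "C *\<^sub>v (a - b) = C *\<^sub>v a - C *\<^sub>v b" using C a b by (simp add: mult_minus_distrib_mat_vec)
  also have "\<dots> = 0\<^sub>v n" using eq C by auto
  finally have "a - b = 0\<^sub>v r" using inj a b by auto
  show ?thesis
  proof (rule eq_vecI)
    fix i assume i: "i < dim_vec b"
    hence "(a - b) $ i = 0" using \<open>a - b = 0\<^sub>v r\<close> b by simp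
    thus "a $ i = b $ i" using a b i by simp
  qed (use a b in auto)
qed

lemma inj_cancel_mat:
  fixes C :: "complex mat"
  assumes C: "C \<in> carrier_mat n r" and inj: "\<forall>v\<in>carrier_vec r. C *\<^sub>v v = 0\<^sub>v n \<longrightarrow> v = 0\<^sub>v r"
    and P: "P \<in> carrier_mat r k" and Q: "Q \<in> carrier_mat r k" and eq: "C * P = C * Q"
  shows "P = Q"
proof (rule eq_matI)
  fix i j assume i: "i < dim_row Q" and j: "j < dim_col Q"
  have jk: "j < k" using j Q by auto
  have "C *\<^sub>v col P j = col (C * P) j" using col_mult2[OF C P jk] by simp
  also have "\<dots> = C *\<^sub>v col Q j" using col_mult2[OF C Q jk] eq by simp
  finally have "C *\<^sub>v col P j = C *\<^sub>v col Q j" .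
  moreover have "col P j \<in> carrier_vec r" "col Q j \<in> carrier_vec r" using P Q by auto
  ultimately have "col P j = col Q j" using inj_cancel_vec[OF C inj] by blast
  moreover have "i < r" using i Q by auto
  ultimately show "P $$ (i,j) = Q $$ (i,j)" using P Q jk by (metis carrier_matD index_col)
qed (insert P Q, auto)

lemma factor:
  fixes X :: "complex mat"
  assumes X: "X \<in> carrier_mat n n" and X00: "X $$ (0,0) = 1" and n0: "0 < n"
  defines "r \<equiv> vec_space.rank n X"
  shows "\<exists>C M R. C \<in> carrier_mat n r \<and> M \<in> carrier_mat r n \<and> R \<in> carrier_mat n r \<and>
     X = C * M \<and> M * R = 1\<^sub>m r \<and> 0 < r \<and>
     (\<forall>v\<in>carrier_vec r. C *\<^sub>v v = 0\<^sub>v n \<longrightarrow> v = 0\<^sub>v r) \<and>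
     (\<forall>i<r. M $$ (i,0) = (if i = 0 then 1 else 0)) \<and>
     (\<forall>j<n. R $$ (j,0) = (if j = 0 then 1 else 0))"
proof -
  have nz: "col X 0 \<noteq> 0\<^sub>v n"
  proof
    assume "col X 0 = 0\<^sub>v n"
    hence "col X 0 $ 0 = 0" using n0 by simp
    thus False using X00 X n0 by simp
  qed
  obtain C A where C: "C \<in> carrier_mat n r" and A: "A \<in> carrier_mat r n" and XCA: "X = C * A"
    and r0: "0 < r" and C0: "col C 0 = col X 0" and Cin: "\<forall>i<r. \<exists>j<n. col C i = col X j"
    and inj: "\<forall>v\<in>carrier_vec r. C *\<^sub>v v = 0\<^sub>v n \<longrightarrow> v = 0\<^sub>v r"
    using colspace_basis[OF X nz n0] unfolding r_def by blast
  define J where "J = (\<lambda>i. if i = 0 then 0 else SOME j. j < n \<and> col C i = col X j)"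
  have J: "\<And>i. i < r \<Longrightarrow> J i < n \<and> col C i = col X (J i)"
  proof -
    fix i assume i: "i < r"
    show "J i < n \<and> col C i = col X (J i)"
    proof (cases "i = 0")
      case True thus ?thesis using C0 n0 J_def by simp
    next
      case False
      thus ?thesis unfolding J_def using someI_ex[OF Cin[rule_format, OF i]] by simp
    qed
  qed
  define R where "R = mat n r (\<lambda>(l,i). if l = J i then 1 else (0::complex))"
  have Rc: "R \<in> carrier_mat n r" unfolding R_def by auto
  have CXR: "C = X * R"
  proof (rule eq_matI)
    fix k i assume k: "k < dim_row (X * R)" and i: "i < dim_col (X * R)"
    hence k': "k < n" and i': "i < r" using X Rc by auto
    have "(X * R) $$ (k,i) = (\<Sum>l<n. X $$ (k,l) * (if l = J i then 1 else 0))"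
      using X Rc k' i' by (simp add: scalar_prod_def R_def atLeast0LessThan)
    also have "\<dots> = X $$ (k, J i)" using J[OF i'] by (simp add: if_distrib cong: if_cong)
    also have "\<dots> = col X (J i) $ k" using X k' J[OF i'] by simp
    also have "\<dots> = C $$ (k,i)" using J[OF i'] C k' i' by (metis carrier_matD col_def index_vec)
    finally show "C $$ (k,i) = (X * R) $$ (k,i)" by simp
  qed (insert C X Rc, auto)
  have "C * (A * R) = C * 1\<^sub>m r"
    using C A Rc XCA CXR by (metis assoc_mult_mat right_mult_one_mat)
  hence AR: "A * R = 1\<^sub>m r" using inj_cancel_mat[OF C inj, where P="A * R" and Q="1\<^sub>m r" and k=r] A Rc by auto
  have "C *\<^sub>v col A 0 = C *\<^sub>v unit_vec r 0"
  proof -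
    have "C *\<^sub>v col A 0 = col X 0" using XCA C A n0 by (metis carrier_matD(2) col_mult2)
    also have "\<dots> = col C 0" using C0 by simp
    also have "\<dots> = C *\<^sub>v unit_vec r 0" using C r0 by (metis carrier_matD(2) col_mult2 col_one right_mult_one_mat one_carrier_mat) 
    finally show ?thesis .
  qed
  hence colA: "col A 0 = unit_vec r 0" using inj_cancel_vec[OF C inj] A n0 by auto
  have A0: "\<forall>i<r. A $$ (i,0) = (if i = 0 then 1 else 0)"
  proof (intro allI impI)
    fix i assume i: "i < r"
    have "A $$ (i,0) = col A 0 $ i" using A i n0 by simp
    thus "A $$ (i,0) = (if i = 0 then 1 else 0)" using colA i by (simp add: unit_vec_def)
  qed
  have R0: "\<forall>j<n. R $$ (j,0) = (if j = 0 then 1 else 0)"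
    using r0 by (auto simp: R_def J_def)
  show ?thesis using C A Rc XCA AR r0 inj A0 R0 by blast
qed



lemma quad_sandwich:
  assumes R: "R \<in> carrier_mat n r" and X: "X \<in> carrier_mat n n"
  shows "quad_form r (adjm R * X * R) w = quad_form n X (\<lambda>a. \<Sum>b<r. R $$ (a,b) * w b)"
proof -
  have "quad_form r (adjm R * X * R) w =
     (\<Sum>b<r. \<Sum>d<r. cnj (w b) * (\<Sum>a<n. \<Sum>c<n. cnj (R $$ (a,b)) * X $$ (a,c) * R $$ (c,d)) * w d)"
    unfolding quad_form_def using sandwich_index[OF R X] by simp
  also have "\<dots> = (\<Sum>b<r. \<Sum>d<r. \<Sum>a<n. \<Sum>c<n. cnj (R $$ (a,b) * w b) * X $$ (a,c) * (R $$ (c,d) * w d))"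
    by (simp add: sum_distrib_left sum_distrib_right mult.commute mult.left_commute)
  also have "\<dots> = (\<Sum>a<n. \<Sum>c<n. \<Sum>d<r. \<Sum>b<r. cnj (R $$ (a,b) * w b) * X $$ (a,c) * (R $$ (c,d) * w d))"
  proof -
    have "(\<Sum>b<r. \<Sum>d<r. \<Sum>a<n. \<Sum>c<n. cnj (R $$ (a,b) * w b) * X $$ (a,c) * (R $$ (c,d) * w d))
       = (\<Sum>b<r. \<Sum>a<n. \<Sum>d<r. \<Sum>c<n. cnj (R $$ (a,b) * w b) * X $$ (a,c) * (R $$ (c,d) * w d))"
      by (rule sum.cong[OF refl], rule sum.swap)
    also have "\<dots> = (\<Sum>a<n. \<Sum>b<r. \<Sum>d<r. \<Sum>c<n. cnj (R $$ (a,b) * w b) * X $$ (a,c) * (R $$ (c,d) * w d))"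
      by (rule sum.swap)
    also have "\<dots> = (\<Sum>a<n. \<Sum>b<r. \<Sum>c<n. \<Sum>d<r. cnj (R $$ (a,b) * w b) * X $$ (a,c) * (R $$ (c,d) * w d))"
      by (rule sum.cong[OF refl], rule sum.cong[OF refl], rule sum.swap)
    also have "\<dots> = (\<Sum>a<n. \<Sum>c<n. \<Sum>b<r. \<Sum>d<r. cnj (R $$ (a,b) * w b) * X $$ (a,c) * (R $$ (c,d) * w d))"
      by (rule sum.cong[OF refl], rule sum.swap)
    also have "\<dots> = (\<Sum>a<n. \<Sum>c<n. \<Sum>d<r. \<Sum>b<r. cnj (R $$ (a,b) * w b) * X $$ (a,c) * (R $$ (c,d) * w d))"
      by (rule sum.cong[OF refl], rule sum.cong[OF refl], rule sum.swap)
    finally show ?thesis .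
  qed
  also have "\<dots> = quad_form n X (\<lambda>a. \<Sum>b<r. R $$ (a,b) * w b)"
    unfolding quad_form_def by (simp add: sum_distrib_left sum_distrib_right cnj_sum)
  finally show ?thesis .
qed



lemma sum_delta0:
  assumes "0 < (n::nat)" and "\<forall>j<n. g j = (if j = 0 then 1 else 0)"
  shows "(\<Sum>j<n. f j * g j) = (f 0 :: complex)" and "(\<Sum>j<n. g j * f j) = f 0"
proof -
  have "(\<Sum>j<n. f j * g j) = (\<Sum>j<n. if j = 0 then f j else 0)" by (rule sum.cong) (use assms in auto)
  also have "\<dots> = f 0" using assms(1) by (simp add: sum.delta')
  finally show "(\<Sum>j<n. f j * g j) = f 0" .
  have "(\<Sum>j<n. g j * f j) = (\<Sum>j<n. if j = 0 then f j else 0)" by (rule sum.cong) (use assms in auto)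
  also have "\<dots> = f 0" using assms(1) by (simp add: sum.delta')
  finally show "(\<Sum>j<n. g j * f j) = f 0" .
qed

lemma mat_idx: "A \<in> carrier_mat a b \<Longrightarrow> B \<in> carrier_mat b c \<Longrightarrow> i < a \<Longrightarrow> j < c \<Longrightarrow>
  (A * B) $$ (i,j) = (\<Sum>k<b. A $$ (i,k) * B $$ (k,j))"
  by (simp add: scalar_prod_def atLeast0LessThan)

lemma div_mul_back: "(y::complex) \<noteq> 0 \<Longrightarrow> x / y * y = x" by simp

theorem proposition7:
  fixes q chi chi' :: nat and W :: impo and X :: "complex mat"
  assumes "q \<ge> 1"
    and "regular_form q chi W"
    and "first_degree q chi W"
    and "leading_eigvec q chi W X"
    and "pos_semidef (chi+1) X"
    and "vec_space.rank (chi+1) X = 1 + chi'"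
    and "chi' \<le> chi"
  shows "\<exists>L W'. gauge_block_form chi' chi L \<and> gauge_rel q (chi'+2) (chi+2) L W W' \<and>
           regular_form q chi' W' \<and>
           (\<exists>X'. leading_eigvec q chi' W' X' \<and> pos_def (chi'+1) X')"
proof -
  define n where "n = chi + 1"
  define r where "r = chi' + 1"
  have n0: "0 < n" and r0: "0 < r" unfolding n_def r_def by auto
  have q1: "q \<ge> 1" using assms(1) .
  have Wc: "\<And>a b. a < chi+2 \<Longrightarrow> b < chi+2 \<Longrightarrow> W a b \<in> carrier_mat q q"
    using assms(2) unfolding regular_form_def by blast
  have W00: "W 0 0 = 1\<^sub>m q" and Wnn: "W n n = 1\<^sub>m q"
    and Wa0: "\<And>a. 0 < a \<Longrightarrow> a < chi+2 \<Longrightarrow> W a 0 = 0\<^sub>m q q"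
    and Wnb: "\<And>b. b < n \<Longrightarrow> W n b = 0\<^sub>m q q"
    using assms(2) unfolding regular_form_def n_def by blast+
  have Wcn: "\<And>a b. a < n \<Longrightarrow> b < n \<Longrightarrow> W a b \<in> carrier_mat q q" using Wc unfolding n_def by simp
  have Xc: "X \<in> carrier_mat n n" and XT: "transfer q n W X = X" and X00: "X $$ (0,0) = 1"
    using assms(4) unfolding leading_eigvec_def V_block_def n_def by blast+
  have psd: "pos_semidef n X" using assms(5) unfolding n_def .
  have herm: "\<And>i j. i < n \<Longrightarrow> j < n \<Longrightarrow> X $$ (j,i) = cnj (X $$ (i,j))"
    using psd unfolding pos_semidef_def hermitian_mat_def by blast
  have adjX: "adjm X = X"
  proof (rule eq_matI)
    fix i j assume "i < dim_row X" "j < dim_col X"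
    thus "adjm X $$ (i,j) = X $$ (i,j)" using herm[of i j] Xc by simp
  qed (insert Xc, auto)
  have rk: "vec_space.rank n X = r" using assms(6) unfolding n_def r_def by simp
  obtain C M R where C: "C \<in> carrier_mat n r" and M: "M \<in> carrier_mat r n" and R: "R \<in> carrier_mat n r"
    and XCM: "X = C * M" and MR: "M * R = 1\<^sub>m r"
    and inj: "\<forall>v\<in>carrier_vec r. C *\<^sub>v v = 0\<^sub>v n \<longrightarrow> v = 0\<^sub>v r"
    and M0: "\<forall>i<r. M $$ (i,0) = (if i = 0 then 1 else 0)"
    and R0: "\<forall>j<n. R $$ (j,0) = (if j = 0 then 1 else 0)"
    using factor[OF Xc X00 n0] unfolding rk by blast
  define V where "V = Vm n W"
  have Vc: "\<And>u v. V u v \<in> carrier_mat n n" unfolding V_def by simp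
  have Xeq: "\<And>a c. a < n \<Longrightarrow> c < n \<Longrightarrow> X $$ (a,c) = (\<Sum>u<q. \<Sum>v<q. (adjm (V u v) * X * V u v) $$ (a,c)) / of_nat q"
  proof -
    fix a c assume a: "a < n" and c: "c < n"
    have "X $$ (a,c) = transfer q n W X $$ (a,c)" using XT by simp
    also have "\<dots> = (\<Sum>u<q. \<Sum>v<q. (adjm (Vm n W u v) * X * Vm n W u v) $$ (a,c)) / of_nat q"
      by (rule transfer_sum[OF Xc q1 Wcn a c])
    finally show "X $$ (a,c) = (\<Sum>u<q. \<Sum>v<q. (adjm (V u v) * X * V u v) $$ (a,c)) / of_nat q"
      unfolding V_def .
  qed
  have XRM: "X * R * M = X"
  proof -
    have "X * R * M = C * (M * R) * M" using XCM C M R by simp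
    also have "\<dots> = X" using XCM C M MR by simp
    finally show ?thesis .
  qed
  define P where "P = 1\<^sub>m n - R * M"
  have Pc: "P \<in> carrier_mat n n" unfolding P_def using R M by auto
  have XP: "X * P = 0\<^sub>m n n"
  proof -
    have "X * P = X * 1\<^sub>m n - X * (R * M)" unfolding P_def
      using mult_minus_distrib_mat[OF Xc one_carrier_mat mult_carrier_mat[OF R M]] Xc by simp
    also have "\<dots> = X - X" using XRM Xc R M by simp
    also have "\<dots> = 0\<^sub>m n n" using Xc by simp
    finally show ?thesis .
  qed
  have aPc: "adjm P \<in> carrier_mat n n" and aRc: "adjm R \<in> carrier_mat r n" and aMc: "adjm M \<in> carrier_mat n r"
    and aVc: "\<And>u v. adjm (V u v) \<in> carrier_mat n n" using Pc R M Vc by auto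
  have massoc[simp]:
    "\<And>A B :: complex mat. A \<in> carrier_mat n n \<Longrightarrow> B \<in> carrier_mat n n \<Longrightarrow> A * B \<in> carrier_mat n n"
    "\<And>A B D :: complex mat. A \<in> carrier_mat n n \<Longrightarrow> B \<in> carrier_mat n n \<Longrightarrow> D \<in> carrier_mat n n \<Longrightarrow> A * B * D = A * (B * D)"
    "\<And>A B D :: complex mat. A \<in> carrier_mat n n \<Longrightarrow> B \<in> carrier_mat n n \<Longrightarrow> D \<in> carrier_mat n r \<Longrightarrow> A * B * D = A * (B * D)"
    "\<And>A B :: complex mat. A \<in> carrier_mat n n \<Longrightarrow> B \<in> carrier_mat n r \<Longrightarrow> A * B \<in> carrier_mat n r"
    "\<And>A B D :: complex mat. A \<in> carrier_mat n n \<Longrightarrow> B \<in> carrier_mat n r \<Longrightarrow> D \<in> carrier_mat r n \<Longrightarrow> A * B * D = A * (B * D)"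
    "\<And>A B D :: complex mat. A \<in> carrier_mat n n \<Longrightarrow> B \<in> carrier_mat n r \<Longrightarrow> D \<in> carrier_mat r r \<Longrightarrow> A * B * D = A * (B * D)"
    "\<And>A B :: complex mat. A \<in> carrier_mat n r \<Longrightarrow> B \<in> carrier_mat r n \<Longrightarrow> A * B \<in> carrier_mat n n"
    "\<And>A B D :: complex mat. A \<in> carrier_mat n r \<Longrightarrow> B \<in> carrier_mat r n \<Longrightarrow> D \<in> carrier_mat n n \<Longrightarrow> A * B * D = A * (B * D)"
    "\<And>A B D :: complex mat. A \<in> carrier_mat n r \<Longrightarrow> B \<in> carrier_mat r n \<Longrightarrow> D \<in> carrier_mat n r \<Longrightarrow> A * B * D = A * (B * D)"
    "\<And>A B :: complex mat. A \<in> carrier_mat n r \<Longrightarrow> B \<in> carrier_mat r r \<Longrightarrow> A * B \<in> carrier_mat n r"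
    "\<And>A B D :: complex mat. A \<in> carrier_mat n r \<Longrightarrow> B \<in> carrier_mat r r \<Longrightarrow> D \<in> carrier_mat r n \<Longrightarrow> A * B * D = A * (B * D)"
    "\<And>A B D :: complex mat. A \<in> carrier_mat n r \<Longrightarrow> B \<in> carrier_mat r r \<Longrightarrow> D \<in> carrier_mat r r \<Longrightarrow> A * B * D = A * (B * D)"
    "\<And>A B :: complex mat. A \<in> carrier_mat r n \<Longrightarrow> B \<in> carrier_mat n n \<Longrightarrow> A * B \<in> carrier_mat r n"
    "\<And>A B D :: complex mat. A \<in> carrier_mat r n \<Longrightarrow> B \<in> carrier_mat n n \<Longrightarrow> D \<in> carrier_mat n n \<Longrightarrow> A * B * D = A * (B * D)"
    "\<And>A B D :: complex mat. A \<in> carrier_mat r n \<Longrightarrow> B \<in> carrier_mat n n \<Longrightarrow> D \<in> carrier_mat n r \<Longrightarrow> A * B * D = A * (B * D)"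
    "\<And>A B :: complex mat. A \<in> carrier_mat r n \<Longrightarrow> B \<in> carrier_mat n r \<Longrightarrow> A * B \<in> carrier_mat r r"
    "\<And>A B D :: complex mat. A \<in> carrier_mat r n \<Longrightarrow> B \<in> carrier_mat n r \<Longrightarrow> D \<in> carrier_mat r n \<Longrightarrow> A * B * D = A * (B * D)"
    "\<And>A B D :: complex mat. A \<in> carrier_mat r n \<Longrightarrow> B \<in> carrier_mat n r \<Longrightarrow> D \<in> carrier_mat r r \<Longrightarrow> A * B * D = A * (B * D)"
    "\<And>A B :: complex mat. A \<in> carrier_mat r r \<Longrightarrow> B \<in> carrier_mat r n \<Longrightarrow> A * B \<in> carrier_mat r n"
    "\<And>A B D :: complex mat. A \<in> carrier_mat r r \<Longrightarrow> B \<in> carrier_mat r n \<Longrightarrow> D \<in> carrier_mat n n \<Longrightarrow> A * B * D = A * (B * D)"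
    "\<And>A B D :: complex mat. A \<in> carrier_mat r r \<Longrightarrow> B \<in> carrier_mat r n \<Longrightarrow> D \<in> carrier_mat n r \<Longrightarrow> A * B * D = A * (B * D)"
    "\<And>A B :: complex mat. A \<in> carrier_mat r r \<Longrightarrow> B \<in> carrier_mat r r \<Longrightarrow> A * B \<in> carrier_mat r r"
    "\<And>A B D :: complex mat. A \<in> carrier_mat r r \<Longrightarrow> B \<in> carrier_mat r r \<Longrightarrow> D \<in> carrier_mat r n \<Longrightarrow> A * B * D = A * (B * D)"
    "\<And>A B D :: complex mat. A \<in> carrier_mat r r \<Longrightarrow> B \<in> carrier_mat r r \<Longrightarrow> D \<in> carrier_mat r r \<Longrightarrow> A * B * D = A * (B * D)"
    by (fact mult_carrier_mat assoc_mult_mat)+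
  have dims[simp]: "dim_row X = n" "dim_col X = n" "dim_row M = r" "dim_col M = n" "dim_row R = n" "dim_col R = r"
    "dim_row C = n" "dim_col C = r" "dim_row P = n" "dim_col P = n" "\<And>u v. dim_row (V u v) = n" "\<And>u v. dim_col (V u v) = n"
    using Xc M R C Pc Vc by auto
  note carr[simp] = Xc M R C Pc Vc aPc aRc aMc aVc
  have PXP: "adjm P * X * P = 0\<^sub>m n n"
  proof -
    have "adjm P * X * P = adjm P * (X * P)" using Pc Xc by (simp only: assoc_mult_mat[OF adjm_carrier[OF Pc] Xc Pc])
    also have "\<dots> = 0\<^sub>m n n" using XP Pc by (simp add: right_mult_zero_mat)
    finally show ?thesis .
  qed
  have invX: "\<And>u v. u < q \<Longrightarrow> v < q \<Longrightarrow> X * (V u v * P) = 0\<^sub>m n n"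
  proof -
    fix u0 v0 assume u0: "u0 < q" and v0: "v0 < q"
    define Z where "Z = (\<lambda>u v. V u v * P)"
    have Zc: "\<And>u v. Z u v \<in> carrier_mat n n" unfolding Z_def by (rule mult_carrier_mat[OF Vc Pc])
    have ZZ: "\<And>u v. adjm P * (adjm (V u v) * X * V u v) * P = adjm (Z u v) * X * Z u v"
    proof -
      fix u v
      have "adjm (Z u v) = adjm P * adjm (V u v)" unfolding Z_def using adjm_mult[OF Vc Pc] .
      thus "adjm P * (adjm (V u v) * X * V u v) * P = adjm (Z u v) * X * Z u v"
        unfolding Z_def using Vc[of u v] Pc Xc by simp
    qed
    show "X * (V u0 v0 * P) = 0\<^sub>m n n"
    proof (rule eq_matI)
      fix i b assume i: "i < dim_row (0\<^sub>m n n :: complex mat)" and b: "b < dim_col (0\<^sub>m n n :: complex mat)"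
      hence i: "i < n" and b: "b < n" by auto
      have "0 = (adjm P * X * P) $$ (b,b)" using PXP b by simp
      also have "\<dots> = (\<Sum>u<q. \<Sum>v<q. (adjm P * (adjm (V u v) * X * V u v) * P) $$ (b,b)) / of_nat q"
        by (rule sandwich_sum[OF Pc Xc _ Xeq b b]) (use Vc Xc in auto)
      also have "\<dots> = (\<Sum>u<q. \<Sum>v<q. quad_form n X (\<lambda>a. Z u v $$ (a,b))) / of_nat q"
        unfolding ZZ quad_form_def using sandwich_index[OF Zc Xc b b] by simp
      finally have f0: "0 = (\<Sum>u<q. \<Sum>v<q. quad_form n X (\<lambda>a. Z u v $$ (a,b))) / of_nat q" .
      have qnz: "(of_nat q :: complex) \<noteq> 0" using q1 by simp
      have "(\<Sum>u<q. \<Sum>v<q. quad_form n X (\<lambda>a. Z u v $$ (a,b))) =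
          ((\<Sum>u<q. \<Sum>v<q. quad_form n X (\<lambda>a. Z u v $$ (a,b))) / of_nat q) * of_nat q"
        using div_mul_back[OF qnz] by (rule sym)
      hence "(\<Sum>u<q. \<Sum>v<q. quad_form n X (\<lambda>a. Z u v $$ (a,b))) = 0"
        unfolding f0[symmetric] by (simp only: mult_zero_left)
      hence "Re (\<Sum>u<q. \<Sum>v<q. quad_form n X (\<lambda>a. Z u v $$ (a,b))) = 0" by (simp only: zero_complex.sel)
      hence "(\<Sum>u<q. \<Sum>v<q. Re (quad_form n X (\<lambda>a. Z u v $$ (a,b)))) = 0"
        by (simp only: Re_sum)
      moreover have nn: "\<And>u v. 0 \<le> Re (quad_form n X (\<lambda>a. Z u v $$ (a,b)))"
        using psd unfolding pos_semidef_def by blast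
      ultimately have "\<forall>u\<in>{..<q}. (\<Sum>v<q. Re (quad_form n X (\<lambda>a. Z u v $$ (a,b)))) = 0"
        by (subst sum_nonneg_eq_0_iff[symmetric]) (auto intro: sum_nonneg)
      hence "\<forall>v\<in>{..<q}. Re (quad_form n X (\<lambda>a. Z u0 v $$ (a,b))) = 0"
        using u0 nn by (subst sum_nonneg_eq_0_iff[symmetric]) auto
      hence "Re (quad_form n X (\<lambda>a. Z u0 v0 $$ (a,b))) = 0" using v0 by auto
      hence "\<forall>i<n. (\<Sum>j<n. X $$ (i,j) * Z u0 v0 $$ (j,b)) = 0" by (rule psd_kernel[OF psd])
      hence "(\<Sum>j<n. X $$ (i,j) * Z u0 v0 $$ (j,b)) = 0" using i by blast
      moreover have "(X * Z u0 v0) $$ (i,b) = (\<Sum>j<n. X $$ (i,j) * Z u0 v0 $$ (j,b))"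
        using Xc Zc[of u0 v0] i b by (simp add: scalar_prod_def atLeast0LessThan)
      ultimately show "(X * (V u0 v0 * P)) $$ (i,b) = 0\<^sub>m n n $$ (i,b)" using i b unfolding Z_def by simp
    qed (use Xc Vc Pc in auto)
  qed
  have MVRM: "\<And>u v. u < q \<Longrightarrow> v < q \<Longrightarrow> M * V u v * R * M = M * V u v"
  proof -
    fix u v assume u: "u < q" and v: "v < q"
    have "C * (M * (V u v * P)) = X * (V u v * P)" using XCM C M Vc[of u v] Pc by simp
    also have "\<dots> = C * 0\<^sub>m r n" using invX[OF u v] C by simp
    finally have "M * (V u v * P) = 0\<^sub>m r n"
      using inj_cancel_mat[OF C inj, where P="M * (V u v * P)" and Q="0\<^sub>m r n" and k=n] M Vc[of u v] Pc by auto
    moreover have "M * (V u v * P) = M * V u v - M * V u v * R * M"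
    proof -
      have "V u v * P = V u v * 1\<^sub>m n - V u v * (R * M)" unfolding P_def
        using mult_minus_distrib_mat[OF Vc[of u v] one_carrier_mat mult_carrier_mat[OF R M]] Vc[of u v] by simp
      hence "M * (V u v * P) = M * (V u v - V u v * (R * M))" using Vc[of u v] by simp
      also have "\<dots> = M * V u v - M * (V u v * (R * M))" 
        using mult_minus_distrib_mat[OF M Vc[of u v] mult_carrier_mat[OF Vc[of u v] mult_carrier_mat[OF R M]]] by simp
      also have "\<dots> = M * V u v - M * V u v * R * M" using M Vc[of u v] R by simp
      finally show ?thesis .
    qed
    ultimately have "M * V u v - M * V u v * R * M = 0\<^sub>m r n" by simp
    thus "M * V u v * R * M = M * V u v"
    proof -
      assume h: "M * V u v - M * V u v * R * M = 0\<^sub>m r n"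
      show ?thesis
      proof (rule eq_matI)
        fix i j assume "i < dim_row (M * V u v)" "j < dim_col (M * V u v)"
        hence ij: "i < r" "j < n" using M Vc[of u v] by auto
        have "(M * V u v - M * V u v * R * M) $$ (i,j) = 0" using h ij by simp
        thus "(M * V u v * R * M) $$ (i,j) = (M * V u v) $$ (i,j)" using ij M Vc[of u v] R by simp
      qed (use M Vc[of u v] R in auto)
    qed
  qed
  define W' :: impo where "W' = (\<lambda>a b. mat q q (\<lambda>(u,v).
     if a < r \<and> b < r then (M * V u v * R) $$ (a,b)
     else if a < r \<and> b = r then (M *\<^sub>v vec n (\<lambda>i. W i n $$ (u,v))) $ a
     else if a = r \<and> b = r then (if u = v then 1 else 0) else 0))"
  define L where "L = mat (r+1) (n+1) (\<lambda>(i,j). if i < r \<and> j < n then M $$ (i,j)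
     else if i = r \<and> j = n then 1 else (0::complex))"
  define X' where "X' = adjm R * X * R"
  have X'c: "X' \<in> carrier_mat r r" unfolding X'_def using R Xc by auto
  have W'c: "\<And>a b. W' a b \<in> carrier_mat q q" unfolding W'_def by auto
  have VW': "\<And>u v. u < q \<Longrightarrow> v < q \<Longrightarrow> Vm r W' u v = M * V u v * R"
  proof -
    fix u v assume uv: "u < q" "v < q"
    show "Vm r W' u v = M * V u v * R"
      by (rule eq_matI) (use uv M R Vc[of u v] in \<open>auto simp: Vm_def W'_def\<close>)
  qed
  have Vcol0: "\<And>u v i. u < q \<Longrightarrow> v < q \<Longrightarrow> i < n \<Longrightarrow> V u v $$ (i,0) = (if i = 0 \<and> u = v then 1 else 0)"
  proof -
    fix u v i assume uv: "u < q" "v < q" and i: "i < n"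
    show "V u v $$ (i,0) = (if i = 0 \<and> u = v then 1 else 0)"
    proof (cases "i = 0")
      case True thus ?thesis using uv n0 W00 by (simp add: V_def Vm_def)
    next
      case False
      hence "W i 0 = 0\<^sub>m q q" using Wa0[of i] i n_def by simp
      thus ?thesis using uv n0 i False by (simp add: V_def Vm_def)
    qed
  qed
  have MVR0: "\<And>u v a. u < q \<Longrightarrow> v < q \<Longrightarrow> a < r \<Longrightarrow> (M * V u v * R) $$ (a,0) = (if a = 0 \<and> u = v then 1 else 0)"
  proof -
    fix u v a assume uv: "u < q" "v < q" and a: "a < r"
    have "(M * V u v * R) $$ (a,0) = (\<Sum>i<n. M $$ (a,i) * (\<Sum>j<n. V u v $$ (i,j) * R $$ (j,0)))"
      using a r0 by (simp add: scalar_prod_def atLeast0LessThan)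
    also have "\<dots> = (\<Sum>i<n. M $$ (a,i) * V u v $$ (i,0))" using sum_delta0(1)[OF n0 R0] by simp
    also have "\<dots> = M $$ (a,0) * (if u = v then 1 else 0)"
    proof -
      have "(\<Sum>i<n. M $$ (a,i) * V u v $$ (i,0)) = (\<Sum>i<n. M $$ (a,i) * (if i = 0 then 1 else 0) * (if u = v then 1 else 0))"
        by (rule sum.cong) (use Vcol0[OF uv] in auto)
      also have "\<dots> = (\<Sum>i<n. M $$ (a,i) * (if i = 0 then 1 else 0)) * (if u = v then 1 else 0)"
        by (simp add: sum_distrib_right)
      also have "\<dots> = M $$ (a,0) * (if u = v then 1 else 0)"
        using sum_delta0(1)[OF n0, of "\<lambda>i. if i = 0 then 1 else 0"] by simp
      finally show ?thesis .
    qed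
    also have "\<dots> = (if a = 0 \<and> u = v then 1 else 0)" using M0 a by simp
    finally show "(M * V u v * R) $$ (a,0) = (if a = 0 \<and> u = v then 1 else 0)" .
  qed
  have e1: "chi' + 2 = r + 1" "chi + 2 = n + 1" "chi' + 1 = r" "chi + 1 = n" unfolding r_def n_def by auto
  have G1: "gauge_block_form chi' chi L"
    unfolding gauge_block_form_def e1 using M0 r0 n0 by (auto simp: L_def)
  have G3: "regular_form q chi' W'"
    unfolding regular_form_def e1
  proof (intro conjI allI impI)
    show "W' 0 0 = 1\<^sub>m q" by (rule eq_matI) (use r0 MVR0 in \<open>auto simp: W'_def\<close>)
    show "W' r r = 1\<^sub>m q" by (rule eq_matI) (auto simp: W'_def)
    fix a assume "0 < a \<and> a < r + 1"
    thus "W' a 0 = 0\<^sub>m q q" by (intro eq_matI) (use r0 MVR0 in \<open>auto simp: W'_def\<close>)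
  next
    fix b assume "b < r"
    thus "W' r b = 0\<^sub>m q q" by (intro eq_matI) (auto simp: W'_def)
  qed (use W'c in auto)
  have G2: "gauge_rel q (chi'+2) (chi+2) L W W'"
    unfolding gauge_rel_def e1
  proof (intro allI impI)
    fix i j u v assume i: "i < r + 1" and j: "j < n + 1" and u: "u < q" and v: "v < q"
    have lhs: "(\<Sum>k<n+1. L $$ (i,k) * W k j $$ (u,v)) = (\<Sum>k<n. L $$ (i,k) * W k j $$ (u,v)) + L $$ (i,n) * W n j $$ (u,v)"
      by simp
    have rhs: "(\<Sum>k<r+1. W' i k $$ (u,v) * L $$ (k,j)) = (\<Sum>k<r. W' i k $$ (u,v) * L $$ (k,j)) + W' i r $$ (u,v) * L $$ (r,j)"
      by simp
    have Lik: "\<And>k. k < n \<Longrightarrow> L $$ (i,k) = (if i < r then M $$ (i,k) else 0)" using i by (auto simp: L_def)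
    have Lkj: "\<And>k. k < r \<Longrightarrow> L $$ (k,j) = (if j < n then M $$ (k,j) else 0)" using j by (auto simp: L_def)
    have Lin: "L $$ (i,n) = (if i = r then 1 else 0)" using i by (auto simp: L_def)
    have Lrj: "L $$ (r,j) = (if j = n then 1 else 0)" using j by (auto simp: L_def)
    show "(\<Sum>k<n+1. L $$ (i,k) * W k j $$ (u,v)) = (\<Sum>k<r+1. W' i k $$ (u,v) * L $$ (k,j))"
    proof (cases "i < r")
      case ir: True
      show ?thesis
      proof (cases "j < n")
        case jn: True
        have "(\<Sum>k<n+1. L $$ (i,k) * W k j $$ (u,v)) = (\<Sum>k<n. M $$ (i,k) * V u v $$ (k,j))"
          unfolding lhs Lin using ir jn u v Lik by (simp add: V_def Vm_def)
        also have "\<dots> = (M * V u v) $$ (i,j)"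
          by (rule mat_idx[OF M Vc ir jn, symmetric])
        also have "\<dots> = (M * V u v * R * M) $$ (i,j)" using MVRM[OF u v] by simp
        also have "\<dots> = (\<Sum>k<r. (M * V u v * R) $$ (i,k) * M $$ (k,j))"
          by (rule mat_idx[OF mult_carrier_mat[OF mult_carrier_mat[OF M Vc] R] M ir jn])
        also have "\<dots> = (\<Sum>k<r+1. W' i k $$ (u,v) * L $$ (k,j))"
          unfolding rhs Lrj using ir jn u v Lkj by (simp add: W'_def)
        finally show ?thesis .
      next
        case jn: False
        hence jn: "j = n" using j by simp
        have "(\<Sum>k<n+1. L $$ (i,k) * W k j $$ (u,v)) = (\<Sum>k<n. M $$ (i,k) * W k n $$ (u,v))"
          unfolding lhs Lin using ir jn Lik by simp
        also have "\<dots> = (M *\<^sub>v vec n (\<lambda>k. W k n $$ (u,v))) $ i"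
          using M ir by (simp add: scalar_prod_def atLeast0LessThan)
        also have "\<dots> = (\<Sum>k<r+1. W' i k $$ (u,v) * L $$ (k,j))"
          unfolding rhs Lrj using ir jn u v Lkj by (simp add: W'_def)
        finally show ?thesis .
      qed
    next
      case ir: False
      hence ir: "i = r" using i by simp
      have W'r: "\<And>k. k < r \<Longrightarrow> W' i k $$ (u,v) = 0" using ir u v by (simp add: W'_def)
      have "(\<Sum>k<n+1. L $$ (i,k) * W k j $$ (u,v)) = W n j $$ (u,v)"
        unfolding lhs Lin using ir Lik by simp
      also have "\<dots> = (if j = n \<and> u = v then 1 else 0)"
        using Wnn Wnb[of j] j u v by (cases "j = n") auto
      also have "\<dots> = (\<Sum>k<r+1. W' i k $$ (u,v) * L $$ (k,j))"
        unfolding rhs Lrj using ir u v W'r by (simp add: W'_def)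
      finally show ?thesis .
    qed
  qed
  have adjX': "adjm X' = X'"
    unfolding X'_def using adjm_mult[OF mult_carrier_mat[OF adjm_carrier[OF R] Xc] R] adjm_mult[OF adjm_carrier[OF R] Xc] adjX
    by simp
  have s1: "\<And>(Z::complex mat) k. Z \<in> carrier_mat n k \<Longrightarrow> X * (R * (M * Z)) = X * Z"
  proof -
    fix Z :: "complex mat" and k :: nat assume Z: "Z \<in> carrier_mat n k"
    have "(X * R * M) * Z = (X * R) * (M * Z)" by (rule assoc_mult_mat[OF mult_carrier_mat[OF Xc R] M Z])
    also have "\<dots> = X * (R * (M * Z))" by (rule assoc_mult_mat[OF Xc R mult_carrier_mat[OF M Z]])
    finally show "X * (R * (M * Z)) = X * Z" using XRM by simp
  qed
  have amr: "adjm M * (adjm R * X) = X"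
  proof -
    have "adjm (X * R * M) = adjm M * adjm (X * R)" using adjm_mult[OF mult_carrier_mat[OF Xc R] M] .
    also have "\<dots> = adjm M * (adjm R * X)" using adjm_mult[OF Xc R] adjX by simp
    finally show ?thesis using XRM adjX by simp
  qed
  have s2: "\<And>(Z::complex mat) k. Z \<in> carrier_mat n k \<Longrightarrow> adjm M * (adjm R * (X * Z)) = X * Z"
  proof -
    fix Z :: "complex mat" and k :: nat assume Z: "Z \<in> carrier_mat n k"
    have "(adjm M * (adjm R * X)) * Z = adjm M * ((adjm R * X) * Z)"
      by (rule assoc_mult_mat[OF aMc mult_carrier_mat[OF aRc Xc] Z])
    also have "\<dots> = adjm M * (adjm R * (X * Z))" using assoc_mult_mat[OF aRc Xc Z] by simp
    finally show "adjm M * (adjm R * (X * Z)) = X * Z" using amr by simp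
  qed
  have KEY: "\<And>u v. adjm (M * V u v * R) * X' * (M * V u v * R) = adjm R * (adjm (V u v) * X * V u v) * R"
  proof -
    fix u v
    have a1: "adjm (M * V u v * R) = adjm R * (adjm (V u v) * adjm M)"
      using adjm_mult[OF mult_carrier_mat[OF M Vc] R] adjm_mult[OF M Vc] by simp
    have "adjm (M * V u v * R) * X' * (M * V u v * R)
       = adjm R * (adjm (V u v) * (adjm M * (adjm R * (X * (R * (M * (V u v * R)))))))"
      unfolding a1 X'_def using M R Xc Vc[of u v] by simp
    also have "\<dots> = adjm R * (adjm (V u v) * (X * (V u v * R)))"
      using s1[OF mult_carrier_mat[OF Vc[of u v] R]] s2[OF mult_carrier_mat[OF Vc[of u v] R]] by simp
    also have "\<dots> = adjm R * (adjm (V u v) * X * V u v) * R" using M R Xc Vc[of u v] by simp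
    finally show "adjm (M * V u v * R) * X' * (M * V u v * R) = adjm R * (adjm (V u v) * X * V u v) * R" .
  qed
  have T': "transfer q r W' X' = X'"
  proof (rule eq_matI)
    fix b d assume "b < dim_row X'" "d < dim_col X'"
    hence b: "b < r" and d: "d < r" using X'c by auto
    have "transfer q r W' X' $$ (b,d) = (\<Sum>u<q. \<Sum>v<q. (adjm (Vm r W' u v) * X' * Vm r W' u v) $$ (b,d)) / of_nat q"
      by (rule transfer_sum[OF X'c q1 W'c b d])
    also have "\<dots> = (\<Sum>u<q. \<Sum>v<q. (adjm R * (adjm (V u v) * X * V u v) * R) $$ (b,d)) / of_nat q"
      using VW' KEY by simp
    also have "\<dots> = X' $$ (b,d)"
      unfolding X'_def by (rule sandwich_sum[OF R Xc _ Xeq b d, symmetric]) (use Vc Xc in auto)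
    finally show "transfer q r W' X' $$ (b,d) = X' $$ (b,d)" .
  qed (use X'c in \<open>auto simp: transfer_def\<close>)
  have X'00: "X' $$ (0,0) = 1"
  proof -
    have "X' $$ (0,0) = (\<Sum>a<n. \<Sum>c<n. cnj (R $$ (a,0)) * X $$ (a,c) * R $$ (c,0))"
      unfolding X'_def by (rule sandwich_index[OF R Xc r0 r0])
    also have "\<dots> = (\<Sum>a<n. cnj (R $$ (a,0)) * X $$ (a,0))"
      using sum_delta0(1)[OF n0 R0, of "\<lambda>c. cnj (R $$ (_,0)) * X $$ (_,c)"] by simp
    also have "\<dots> = X $$ (0,0)"
    proof -
      have R0': "\<forall>j<n. cnj (R $$ (j,0)) = (if j = 0 then 1 else 0)" using R0 by simp
      show ?thesis using sum_delta0(2)[OF n0 R0', of "\<lambda>a. X $$ (a,0)"] by simp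
    qed
    finally show ?thesis using X00 by simp
  qed
  have G4: "leading_eigvec q chi' W' X'"
    unfolding leading_eigvec_def V_block_def e1 using X'c T' X'00 by blast
  have G5: "pos_def (chi'+1) X'"
    unfolding pos_def_def e1
  proof (intro conjI allI impI)
    show "hermitian_mat r X'" unfolding hermitian_mat_def
    proof (intro conjI allI impI)
      fix i j assume i: "i < r" and j: "j < r"
      have "X' $$ (j,i) = adjm X' $$ (j,i)" using adjX' by simp
      thus "X' $$ (j,i) = cnj (X' $$ (i,j))" using X'c i j by simp
    qed (rule X'c)
    fix w :: "nat \<Rightarrow> complex" assume ex: "\<exists>i<r. w i \<noteq> 0"
    define y where "y = R *\<^sub>v vec r w"
    have yc: "y \<in> carrier_vec n" unfolding y_def by (rule mult_mat_vec_carrier[OF R vec_carrier])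
    have yi: "\<And>a. a < n \<Longrightarrow> y $ a = (\<Sum>b<r. R $$ (a,b) * w b)"
      unfolding y_def using R by (simp add: scalar_prod_def atLeast0LessThan)
    have qq: "quad_form r X' w = quad_form n X (\<lambda>a. \<Sum>b<r. R $$ (a,b) * w b)"
      unfolding X'_def by (rule quad_sandwich[OF R Xc])
    have nn: "0 \<le> Re (quad_form r X' w)" unfolding qq using psd unfolding pos_semidef_def by blast
    show "0 < Re (quad_form r X' w)"
    proof (rule ccontr)
      assume "\<not> 0 < Re (quad_form r X' w)"
      hence "Re (quad_form n X (\<lambda>a. \<Sum>b<r. R $$ (a,b) * w b)) = 0" using nn qq by simp
      hence k: "\<forall>i<n. (\<Sum>j<n. X $$ (i,j) * (\<Sum>b<r. R $$ (j,b) * w b)) = 0" by (rule psd_kernel[OF psd])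
      have Xy: "X *\<^sub>v y = 0\<^sub>v n"
      proof (rule eq_vecI)
        fix i assume "i < dim_vec (0\<^sub>v n :: complex vec)"
        hence i: "i < n" by simp
        have "(X *\<^sub>v y) $ i = (\<Sum>j<n. X $$ (i,j) * y $ j)"
          using Xc yc i by (simp add: scalar_prod_def atLeast0LessThan)
        also have "\<dots> = 0" using k i yi by simp
        finally show "(X *\<^sub>v y) $ i = 0\<^sub>v n $ i" using i by simp
      qed (use Xc in auto)
      have "C *\<^sub>v (M *\<^sub>v y) = X *\<^sub>v y" using XCM assoc_mult_mat_vec[OF C M yc] by simp
      moreover have "M *\<^sub>v y \<in> carrier_vec r" by (rule mult_mat_vec_carrier[OF M yc])
      ultimately have "M *\<^sub>v y = 0\<^sub>v r" using Xy inj by auto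
      moreover have "M *\<^sub>v y = vec r w" unfolding y_def
        using assoc_mult_mat_vec[OF M R vec_carrier[of r w]] MR by simp
      ultimately have "vec r w = 0\<^sub>v r" by simp
      moreover obtain i where "i < r" "w i \<noteq> 0" using ex by blast
      ultimately show False by (metis index_vec index_zero_vec(1))
    qed
  qed
  show ?thesis using G1 G2 G3 G4 G5 by blast
qed


end
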